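(* Let $d = 2$, $m \geq 1$, $q \in \mathbb{R}^m$ with positive integer entries, $n = q_1 + \cdots + q_m$, and $\tilde Q = \mathrm{blockdiag}(q_1 I_{q_1}, \dots, q_m I_{q_m}) \in \mathbb{R}^{n\times n}$. For $X = (x_1,\dots,x_m) \in (\mathbb{S}^1)^m$ let $\tilde X \in (\mathbb{S}^1)^n$ consist of $x_1$ repeated $q_1$ times, then $x_2$ repeated $q_2$ times, ..., then $x_m$ repeated $q_m$ times. Let $f_m(X) = \frac12\langle qq^\top, \varphi(X^\top X)\rangle$ and $f_n(\tilde X) = \frac12\langle \mathbf{1}_n\mathbf{1}_n^\top, \varphi(\tilde X^\top\tilde X)\rangle$. If $X$ is a critical point of $f_m$, then $\tilde X$ is a critical point of $f_n$. Furthermore, let $M \in \mathbb{R}^{m\times m}$ have entries $m_{ij} = q_iq_j h(x_i^\top x_j)$, $D = \mathrm{diag}(M\mathbf{1}_m)$ with diagonal entries $d_{ii}$, and let $\tilde M \in \mathbb{R}^{n\times n}$ have entries $\tilde m_{ij} = h(\tilde x_i^\top \tilde x_j)$, where $h(t) = t\varphi'(t) - (1-t^2)\varphi''(t)$. If $\lambda_1,\dots,\lambda_{m-1},0$ are the eigenvalues of $L(M)$, then the eigenvalues of $\tilde Q^{1/2} L(\tilde M)\tilde Q^{1/2}$ are exactly $\lambda_1,\dots,\lambda_{m-1},0$ together with, for each $i = 1,\dots,m$, the value $d_{ii}$ with multiplicity $q_i - 1$ (accounting for all $n$ eigenvalues).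
   Context: $\varphi$ is twice continuously differentiable on $[-1,1]$ and applied entrywise to matrices. $(\mathbb{S}^1)^k$ is the set of $2\times k$ real matrices with unit-norm columns. $\langle A,B\rangle = \mathrm{Tr}(A^\top B)$. For symmetric $M$, $L(M) = \mathrm{diag}(M\mathbf{1}) - M$. Criticality is for the Riemannian gradient on $(\mathbb{S}^1)^k$ with the Frobenius metric. (Note $L(M)\mathbf{1}=0$, so $0$ is always an eigenvalue of $L(M)$.) *)

theory Defs
  imports Complex_Main "Jordan_Normal_Form.Char_Poly"
begin

definition circles :: "nat \<Rightarrow> real mat set" where
  "circles k = {X. X \<in> carrier_mat 2 k \<and> (\<forall>j<k. col X j \<bullet> col X j = 1)}"

definition tr :: "real mat \<Rightarrow> real" where
  "tr A = (\<Sum>i<dim_row A. A $$ (i,i))"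

definition frob :: "real mat \<Rightarrow> real mat \<Rightarrow> real" where
  "frob A B = tr (transpose_mat A * B)"

definition lap :: "real mat \<Rightarrow> real mat" where
  "lap M = mat (dim_row M) (dim_col M)
     (\<lambda>(i,j). (if i = j then (\<Sum>l<dim_col M. M $$ (i,l)) else 0) - M $$ (i,j))"

text \<open>Criticality on (S^1)^k for the Riemannian gradient (Frobenius metric): the
  Riemannian gradient vanishes iff the differential of F vanishes on every tangent
  vector, i.e. iff (F o gamma)'(0) = 0 for every curve gamma in (S^1)^k through X that is
  differentiable at 0.\<close>
definition critical :: "nat \<Rightarrow> (real mat \<Rightarrow> real) \<Rightarrow> real mat \<Rightarrow> bool" where
  "critical k F X \<longleftrightarrow> X \<in> circles k \<and>
     (\<forall>\<gamma>::real \<Rightarrow> real mat.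
        (\<forall>t. \<gamma> t \<in> circles k) \<and> \<gamma> 0 = X \<and>
        (\<forall>a<2. \<forall>b<k. (\<lambda>t. \<gamma> t $$ (a,b)) differentiable (at 0))
        \<longrightarrow> ((\<lambda>t. F (\<gamma> t)) has_real_derivative 0) (at 0))"

text \<open>Block index of position j (0-based) for block sizes q 0, ..., q (m-1):
  the unique i with (sum l<i. q l) <= j < (sum l<Suc i. q l).\<close>
definition blk :: "(nat \<Rightarrow> nat) \<Rightarrow> nat \<Rightarrow> nat" where
  "blk q j = (LEAST i. j < (\<Sum>l<Suc i. q l))"

definition rep_cols :: "(nat \<Rightarrow> nat) \<Rightarrow> nat \<Rightarrow> real mat \<Rightarrow> real mat" where
  "rep_cols q m X = mat 2 (\<Sum>i<m. q i) (\<lambda>(a,j). X $$ (a, blk q j))"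

definition sqrtQ :: "(nat \<Rightarrow> nat) \<Rightarrow> nat \<Rightarrow> real mat" where
  "sqrtQ q m = mat (\<Sum>i<m. q i) (\<Sum>i<m. q i)
     (\<lambda>(i,j). if i = j then sqrt (real (q (blk q i))) else 0)"

definition eigenvalues :: "real mat \<Rightarrow> real multiset" where
  "eigenvalues A = proots (char_poly A)"

end

theory Submission
  imports Defs
begin

definition bst :: "(nat \<Rightarrow> nat) \<Rightarrow> nat \<Rightarrow> nat" where "bst q i = (\<Sum>l<i. q l)"

lemma bst_Suc: "bst q (Suc i) = bst q i + q i" by (simp add: bst_def)
lemma bst_mono: "i \<le> j \<Longrightarrow> bst q i \<le> bst q j"
  unfolding bst_def by (rule sum_mono2) auto

lemma blk_eq: assumes "bst q j \<le> a" "a < bst q (Suc j)" shows "blk q a = j"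
  unfolding blk_def
proof (rule Least_equality)
  show "a < (\<Sum>l<Suc j. q l)" using assms(2) by (simp add: bst_def)
next
  fix y assume "a < (\<Sum>l<Suc y. q l)"
  hence "a < bst q (Suc y)" by (simp add: bst_def)
  show "j \<le> y"
  proof (rule ccontr)
    assume "\<not> j \<le> y" hence "Suc y \<le> j" by simp
    from bst_mono[OF this, of q] assms(1) \<open>a < bst q (Suc y)\<close> show False by simp
  qed
qed

lemma blk_props: assumes "a < bst q m"
  shows "blk q a < m" "bst q (blk q a) \<le> a" "a < bst q (Suc (blk q a))"
proof -
  have m0: "m > 0" using assms by (cases m) (auto simp: bst_def)
  have ex: "a < (\<Sum>l<Suc (m - 1). q l)" using assms m0 by (simp add: bst_def)
  have le: "blk q a \<le> m - 1" unfolding blk_def by (rule Least_le) (rule ex)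
  thus "blk q a < m" using m0 by simp
  show "a < bst q (Suc (blk q a))" unfolding blk_def bst_def by (rule LeastI) (rule ex)
  show "bst q (blk q a) \<le> a"
  proof (cases "blk q a")
    case 0 thus ?thesis by (simp add: bst_def)
  next
    case (Suc k)
    have "\<not> a < (\<Sum>l<Suc k. q l)"
    proof
      assume "a < (\<Sum>l<Suc k. q l)"
      hence "blk q a \<le> k" unfolding blk_def by (rule Least_le)
      thus False using Suc by simp
    qed
    thus ?thesis using Suc by (simp add: bst_def)
  qed
qed

lemma blk_bst: "q j > 0 \<Longrightarrow> blk q (bst q j) = j"
  by (rule blk_eq) (auto simp: bst_Suc)

lemma sum_blocks: "(\<Sum>a<bst q k. F a) = (\<Sum>j<k. \<Sum>a\<in>{bst q j..<bst q (Suc j)}. F a)"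
proof (induction k)
  case 0 then show ?case by (simp add: bst_def)
next
  case (Suc k)
  have "(\<Sum>a<bst q (Suc k). F a) = (\<Sum>a\<in>{0..<bst q k}. F a) + (\<Sum>a\<in>{bst q k..<bst q (Suc k)}. F a)"
    by (subst sum.atLeastLessThan_concat) (auto simp: bst_Suc atLeast0LessThan)
  also have "\<dots> = (\<Sum>j<Suc k. \<Sum>a\<in>{bst q j..<bst q (Suc j)}. F a)"
    using Suc by (simp add: atLeast0LessThan)
  finally show ?case .
qed

lemma sum_blk: "(\<Sum>a<bst q k. G (blk q a)) = (\<Sum>j<k. of_nat (q j) * (G j :: 'a::semiring_1))"
proof -
  have "(\<Sum>a<bst q k. G (blk q a)) = (\<Sum>j<k. \<Sum>a\<in>{bst q j..<bst q (Suc j)}. G (blk q a))"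
    by (rule sum_blocks)
  also have "\<dots> = (\<Sum>j<k. \<Sum>a\<in>{bst q j..<bst q (Suc j)}. G j)"
    by (intro sum.cong refl) (auto simp: blk_eq)
  also have "\<dots> = (\<Sum>j<k. of_nat (q j) * G j)"
    by (intro sum.cong refl) (simp add: bst_Suc)
  finally show ?thesis .
qed


lemma char_poly_four_block_zeros: assumes A1: "(A1::'a::idom mat) \<in> carrier_mat k k"
  and A2: "A2 \<in> carrier_mat k n" and A3: "A3 \<in> carrier_mat n n"
  shows "char_poly (four_block_mat A1 A2 (0\<^sub>m n k) A3) = char_poly A1 * char_poly A3" 
    (is "char_poly ?A = ?cp1 * ?cp3")
proof -
  let ?cm = "\<lambda> A. [:0, 1:] \<cdot>\<^sub>m 1\<^sub>m (dim_row A) +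
         map_mat (\<lambda>a. [:- a:]) A"
  let ?B2 = "map_mat (\<lambda>a. [:- a:]) A2"
  have "char_poly ?A = det (?cm ?A)"
    unfolding char_poly_defs using A1 A3 by simp
  also have "?cm ?A = four_block_mat (?cm A1) ?B2 (0\<^sub>m n k) (?cm A3)"
    by (rule eq_matI, insert A1 A2 A3, auto simp: one_poly_def)
  also have "det \<dots> = det (?cm A1) * det (?cm A3)"
    by (rule det_four_block_mat_lower_left_zero[OF _ _ refl], insert A1 A2 A3, auto)
  also have "\<dots> = ?cp1 * ?cp3" unfolding char_poly_defs ..
  finally show ?thesis .
qed

lemma sum_delta_mult: "(\<Sum>a<(n::nat). (if a = p then x else 0) * (g a::real)) = (if p < n then x * g p else 0)"
  by (subst sum.mono_neutral_cong_right[of "{..<n}" "{p}\<inter>{..<n}" _ "\<lambda>_. x * g p"]) (auto split: if_splits)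

lemma sum_delta_mult': "(\<Sum>a<(n::nat). (g a::real) * (if a = p then x else 0)) = (if p < n then g p * x else 0)"
  by (subst sum.mono_neutral_cong_right[of "{..<n}" "{p}\<inter>{..<n}" _ "\<lambda>_. g p * x"]) (auto split: if_splits)

lemma diag_conj_entry:
  assumes L: "L \<in> carrier_mat n n" and a: "a < n" and b: "b < n"
  shows "(mat n n (\<lambda>(i,j). if i = j then f i else 0) * L * mat n n (\<lambda>(i,j). if i = j then f i else (0::real))) $$ (a,b)
     = f a * L $$ (a,b) * f b"
  using L a b
  by (simp add: index_mult_mat scalar_prod_def sum_delta_mult sum_delta_mult' atLeast0LessThan
       if_distrib[where f = "\<lambda>z. z * _"] cong: if_cong)



lemma mult_entry: "A \<in> carrier_mat n k \<Longrightarrow> B \<in> carrier_mat k l \<Longrightarrow> i < n \<Longrightarrow> j < l \<Longrightarrow>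
  (A * B) $$ (i,j) = (\<Sum>a<k. A $$ (i,a) * B $$ (a,j))"
  by (simp add: index_mult_mat scalar_prod_def atLeast0LessThan)

lemma sum_single_mset: "(\<Sum>a\<in>{u..<v::nat}. {#x#}) = replicate_mset (v - u) x"
proof (induction v)
  case 0 then show ?case by simp
next
  case (Suc v)
  show ?case
  proof (cases "u \<le> v")
    case True
    hence "{u..<Suc v} = insert v {u..<v}" by auto
    hence "(\<Sum>a\<in>{u..<Suc v}. {#x#}) = {#x#} + (\<Sum>a\<in>{u..<v}. {#x#})" by simp
    also have "\<dots> = replicate_mset (Suc v - u) x" using Suc True by (simp add: Suc_diff_le)
    finally show ?thesis .
  qed simp
qed

lemma proots_lin_prod: "proots (\<Prod>a\<leftarrow>xs. [:- a, 1:]) = mset (xs::real list)"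
proof (induction xs)
  case (Cons x xs)
  have nz: "(\<Prod>a\<leftarrow>xs. [:- a, 1:]) \<noteq> (0::real poly)" by (auto simp: prod_list_zero_iff)
  have eq: "(\<Prod>a\<leftarrow>x#xs. [:- a, 1:]) = [:-x,1:] * (\<Prod>a\<leftarrow>xs. [:- a, 1:])" by simp
  have "proots (\<Prod>a\<leftarrow>x#xs. [:- a, 1:]) = proots [:-x,1:] + proots (\<Prod>a\<leftarrow>xs. [:- a, 1:])"
    unfolding eq by (rule proots_mult) (use nz in auto)
  then show ?case using Cons by simp
qed simp

lemma sum_upt_mset: "(\<Sum>i\<in>{0..<N}. {# f i #}) = mset (map f [0..<N])"
  by (induction N) auto

lemma part2:
  fixes q :: "nat \<Rightarrow> nat" and m :: nat and H :: "nat \<Rightarrow> nat \<Rightarrow> real"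
  assumes q: "\<And>i. i < m \<Longrightarrow> q i > 0"
  defines "n \<equiv> bst q m"
  defines "M \<equiv> mat m m (\<lambda>(i,j). real (q i) * real (q j) * H i j)"
  shows "eigenvalues (sqrtQ q m * lap (mat n n (\<lambda>(a,b). H (blk q a) (blk q b))) * sqrtQ q m)
     = eigenvalues (lap M) + (\<Sum>i<m. replicate_mset (q i - 1) (\<Sum>j<m. M $$ (i,j)))"
proof -
  define d where "d i = (\<Sum>j<m. M $$ (i,j))" for i
  have dM: "d i = (\<Sum>j<m. real (q i) * real (q j) * H i j)" if "i < m" for i
    using that by (simp add: d_def M_def)
  have sq: "sqrt (real (q i)) * sqrt (real (q i)) = real (q i)" for i by simp
  have sqpos: "sqrt (real (q i)) > 0" if "i < m" for i using q[OF that] by simp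
  have blkn: "blk q a < m" "bst q (blk q a) \<le> a" "a < bst q (Suc (blk q a))" if "a < n" for a
    using blk_props[of a q m] that by (auto simp: n_def)
  have bstn: "bst q i < n" "blk q (bst q i) = i" if "i < m" for i
  proof -
    have "bst q i < bst q (Suc i)" using q[OF that] by (simp add: bst_Suc)
    also have "\<dots> \<le> n" unfolding n_def by (rule bst_mono) (use that in simp)
    finally show "bst q i < n" .
    show "blk q (bst q i) = i" by (rule blk_bst[of q i, OF q[OF that]])
  qed
  define Lt where "Lt = lap (mat n n (\<lambda>(a,b). H (blk q a) (blk q b)))"
  define A where "A = sqrtQ q m * Lt * sqrtQ q m"
  have sQ: "sqrtQ q m = mat n n (\<lambda>(i,j). if i = j then sqrt (real (q (blk q i))) else 0)"
    by (simp add: sqrtQ_def n_def bst_def)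
  have Lt: "Lt \<in> carrier_mat n n" by (simp add: Lt_def lap_def)
  have Ltent: "Lt $$ (a,b) = (if a = b then (\<Sum>j<m. real (q j) * H (blk q a) j) else 0) - H (blk q a) (blk q b)"
    if "a < n" "b < n" for a b
  proof -
    have "\<And>a'. (\<Sum>l<n. H (blk q a') (blk q l)) = (\<Sum>j<m. real (q j) * H (blk q a') j)"
      unfolding n_def by (rule sum_blk)
    thus ?thesis using that by (simp add: Lt_def lap_def)
  qed
  have Acar: "A \<in> carrier_mat n n" unfolding A_def sQ
    by (rule mult_carrier_mat[OF mult_carrier_mat[OF _ Lt]]) auto
  have Aent: "A $$ (a,b) = (if a = b then d (blk q a) else 0)
      - sqrt (real (q (blk q a))) * sqrt (real (q (blk q b))) * H (blk q a) (blk q b)"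
    if "a < n" "b < n" for a b
  proof -
    have "A $$ (a,b) = sqrt (real (q (blk q a))) * Lt $$ (a,b) * sqrt (real (q (blk q b)))"
      unfolding A_def sQ by (rule diag_conj_entry[OF Lt that])
    also have "\<dots> = (if a = b then d (blk q a) else 0)
      - sqrt (real (q (blk q a))) * sqrt (real (q (blk q b))) * H (blk q a) (blk q b)"
      using that blkn[OF that(1)] 
      by (auto simp: Ltent dM sum_distrib_left algebra_simps)
    finally show ?thesis .
  qed
  define NF where "NF = {a. a < n \<and> a \<noteq> bst q (blk q a)}"
  have NF_eq: "NF = {..<n} - bst q ` {..<m}"
  proof (intro equalityI subsetI)
    fix a assume "a \<in> NF"
    thus "a \<in> {..<n} - bst q ` {..<m}" using bstn by (auto simp: NF_def)
  next
    fix a assume a: "a \<in> {..<n} - bst q ` {..<m}"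
    hence "a < n" by auto
    from blkn[OF this] a show "a \<in> NF" unfolding NF_def by force
  qed
  have injb: "inj_on (bst q) {..<m}"
    by (rule inj_on_inverseI[of _ "blk q"]) (use bstn in auto)
  have bsub: "bst q ` {..<m} \<subseteq> {..<n}" using bstn by auto
  have cardNF: "card NF = n - m"
    unfolding NF_eq by (subst card_Diff_subset) (use bsub card_image[OF injb] in auto)
  have mn: "m \<le> n" using card_mono[OF _ bsub] card_image[OF injb] by simp
  have finNF: "finite NF" by (simp add: NF_def)
  obtain hh where hh: "bij_betw hh {0..<n-m} NF"
    using ex_bij_betw_nat_finite[OF finNF] cardNF by metis
  have hhn: "hh k < n" "hh k \<noteq> bst q (blk q (hh k))" if "k < n - m" for k
    using hh that unfolding bij_betw_def NF_def by auto
  have hhinj: "hh k = hh k' \<longleftrightarrow> k = k'" if "k < n - m" "k' < n - m" for k k'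
    using hh that unfolding bij_betw_def inj_on_def by auto
  define S where "S = mat n n (\<lambda>(a,c). if c < m then (if blk q a = c then 1 / sqrt (real (q c)) else 0)
     else (if a = hh (c - m) then 1 else (0::real)))"
  define T where "T = mat n n (\<lambda>(c,a). if c < m then (if a = bst q c then sqrt (real (q c)) else 0)
     else (if a = hh (c - m) then 1 else 0) - (if a = bst q (blk q (hh (c - m))) then 1 else (0::real)))"
  have Scar: "S \<in> carrier_mat n n" and Tcar: "T \<in> carrier_mat n n" by (auto simp: S_def T_def)
  have TS: "T * S = 1\<^sub>m n"
  proof (rule eq_matI)
    fix c' c assume c': "c' < dim_row (1\<^sub>m n :: real mat)" and c: "c < dim_col (1\<^sub>m n :: real mat)"
    hence c'n: "c' < n" and cn: "c < n" by auto
    have "(T * S) $$ (c', c) = (\<Sum>a<n. T $$ (c',a) * S $$ (a,c))"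
      by (rule mult_entry[OF Tcar Scar c'n cn])
    also have "\<dots> = 1\<^sub>m n $$ (c', c)"
    proof (cases "c' < m")
      case True
      show ?thesis
      proof (cases "c < m")
        case True2: True
        then show ?thesis using c'n cn bstn[OF True] sqpos[OF True] True
          by (auto simp: T_def S_def sum_delta_mult)
      next
        case False
        hence "c - m < n - m" using cn mn by simp
        then show ?thesis using c'n cn bstn[OF True] hhn[of "c - m"] True False
          by (auto simp: T_def S_def sum_delta_mult)
      qed
    next
      case False
      hence k': "c' - m < n - m" using c'n mn by simp
      show ?thesis
      proof (cases "c < m")
        case True
        then show ?thesis using c'n cn hhn[OF k'] blkn False bstn[OF blkn(1)[OF hhn(1)[OF k']]]
          by (auto simp: T_def S_def sum_delta_mult left_diff_distrib sum_subtractf)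
      next
        case False2: False
        hence k: "c - m < n - m" using cn mn by simp
        have eqc: "c' - m = c - m \<longleftrightarrow> c' = c" using False False2 by arith
        then show ?thesis using c'n cn hhn[OF k'] hhn[OF k] hhinj[OF k' k] eqc False False2 bstn[OF blkn(1)[OF hhn(1)[OF k']]]
          by (auto simp: T_def S_def sum_delta_mult left_diff_distrib sum_subtractf)
      qed
    qed
    finally show "(T * S) $$ (c', c) = 1\<^sub>m n $$ (c', c)" .
  qed (auto simp: S_def T_def)
  have ST: "S * T = 1\<^sub>m n" by (rule mat_mult_left_right_inverse[OF Tcar Scar TS])
  have ASent1: "(A * S) $$ (a,c) = (if blk q a = c then d c / sqrt (real (q c)) else 0)
     - sqrt (real (q (blk q a))) * real (q c) * H (blk q a) c" if a: "a < n" and c: "c < m" for a c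
  proof -
    define K where "K j = sqrt (real (q (blk q a))) * sqrt (real (q j)) * H (blk q a) j" for j
    define G where "G j = K j * (if j = c then 1 / sqrt (real (q c)) else 0)" for j
    have cn: "c < n" using c mn by simp
    have "(A * S) $$ (a,c) = (\<Sum>b<n. A $$ (a,b) * S $$ (b,c))"
      by (rule mult_entry[OF Acar Scar a cn])
    also have "\<dots> = (\<Sum>b<n. (if b = a then d (blk q a) * (if blk q a = c then 1 / sqrt (real (q c)) else 0) else 0)
       - G (blk q b))"
      by (rule sum.cong[OF refl]) (use a c cn in \<open>simp add: Aent S_def G_def K_def algebra_simps\<close>)
    also have "\<dots> = d (blk q a) * (if blk q a = c then 1 / sqrt (real (q c)) else 0) - (\<Sum>b<bst q m. G (blk q b))"
      using a by (simp add: sum_subtractf n_def)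
    also have "(\<Sum>b<bst q m. G (blk q b)) = (\<Sum>j<m. real (q j) * G j)" by (rule sum_blk)
    also have "\<dots> = real (q c) * K c / sqrt (real (q c))"
      using c by (simp add: G_def if_distrib[where f = "\<lambda>z. _ * z"] sum.delta cong: if_cong)
    also have "\<dots> = sqrt (real (q (blk q a))) * real (q c) * H (blk q a) c"
      using sqpos[OF c] by (simp add: K_def)
    finally show ?thesis by simp
  qed
  have ASent2: "(A * S) $$ (a,c) = A $$ (a, hh (c - m))" if a: "a < n" and c: "c < n" "\<not> c < m" for a c
  proof -
    have k: "c - m < n - m" using c mn by simp
    have "(A * S) $$ (a,c) = (\<Sum>b<n. A $$ (a,b) * S $$ (b,c))"
      by (rule mult_entry[OF Acar Scar a c(1)])
    also have "\<dots> = (\<Sum>b<n. A $$ (a,b) * (if b = hh (c - m) then 1 else 0))"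
      by (rule sum.cong[OF refl]) (use c in \<open>auto simp: S_def\<close>)
    also have "\<dots> = A $$ (a, hh (c - m))" using hhn[OF k] by (simp add: sum_delta_mult')
    finally show ?thesis .
  qed
  define B where "B = T * (A * S)"
  have AScar: "A * S \<in> carrier_mat n n" using Acar Scar by simp
  have Bcar: "B \<in> carrier_mat n n" using Tcar AScar by (simp add: B_def)
  have Bent1: "B $$ (c',c) = sqrt (real (q c')) * (A * S) $$ (bst q c', c)" if "c' < m" "c < n" for c' c
  proof -
    have "B $$ (c',c) = (\<Sum>a<n. T $$ (c',a) * (A * S) $$ (a,c))"
      unfolding B_def by (rule mult_entry[OF Tcar AScar]) (use that mn in auto)
    also have "\<dots> = sqrt (real (q c')) * (A * S) $$ (bst q c', c)"
      using that mn bstn[OF that(1)] by (simp add: T_def sum_delta_mult)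
    finally show ?thesis .
  qed
  have Bent2: "B $$ (c',c) = (A * S) $$ (hh (c' - m), c) - (A * S) $$ (bst q (blk q (hh (c' - m))), c)"
    if "\<not> c' < m" "c' < n" "c < n" for c' c
  proof -
    have k': "c' - m < n - m" using that mn by simp
    have "B $$ (c',c) = (\<Sum>a<n. T $$ (c',a) * (A * S) $$ (a,c))"
      unfolding B_def by (rule mult_entry[OF Tcar AScar]) (use that in auto)
    also have "\<dots> = (A * S) $$ (hh (c' - m), c) - (A * S) $$ (bst q (blk q (hh (c' - m))), c)"
      using that hhn[OF k'] bstn[OF blkn(1)[OF hhn(1)[OF k']]]
      by (simp add: T_def sum_delta_mult left_diff_distrib sum_subtractf)
    finally show ?thesis .
  qed
  define C where "C = mat m (n-m) (\<lambda>(i,k). B $$ (i, m+k))"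
  define Dg where "Dg = mat (n-m) (n-m) (\<lambda>(i,k). if i = k then d (blk q (hh i)) else 0)"
  have lapM: "lap M \<in> carrier_mat m m" by (simp add: lap_def M_def)
  have lapMent: "lap M $$ (i,j) = (if i = j then d i else 0) - real (q i) * real (q j) * H i j"
    if "i < m" "j < m" for i j using that by (simp add: lap_def M_def d_def)
  have Bblock: "B = four_block_mat (lap M) C (0\<^sub>m (n-m) m) Dg"
  proof (rule eq_matI)
    fix i j assume i: "i < dim_row (four_block_mat (lap M) C (0\<^sub>m (n-m) m) Dg)"
      and j: "j < dim_col (four_block_mat (lap M) C (0\<^sub>m (n-m) m) Dg)"
    have dimL: "dim_row (lap M) = m" "dim_col (lap M) = m" using lapM by auto
    have i': "i < m + (n - m)" and j': "j < m + (n - m)" using i j by (auto simp: dimL Dg_def)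
    hence "i < n" "j < n" using mn by auto
    note ij = this
    have fb: "four_block_mat (lap M) C (0\<^sub>m (n-m) m) Dg $$ (i,j) = (if i < m then
      if j < m then lap M $$ (i,j) else C $$ (i,j - m)
      else if j < m then 0\<^sub>m (n-m) m $$ (i - m, j) else Dg $$ (i - m, j - m))"
      using i' j' by (simp add: dimL Dg_def)
    show "B $$ (i,j) = four_block_mat (lap M) C (0\<^sub>m (n-m) m) Dg $$ (i,j)"
    proof (cases "i < m")
      case True
      show ?thesis
      proof (cases "j < m")
        case True2: True
        show ?thesis unfolding fb using True True2 ij bstn[OF True] sqpos[OF True] q[OF True2]
          by (simp add: Bent1 ASent1 lapMent algebra_simps)
      next
        case False
        show ?thesis unfolding fb using True False ij by (simp add: C_def)
      qed
    next
      case False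
      hence k': "i - m < n - m" using ij mn by simp
      note p = hhn[OF k'] bstn[OF blkn(1)[OF hhn(1)[OF k']]] blkn(1)[OF hhn(1)[OF k']]
      show ?thesis
      proof (cases "j < m")
        case True
        show ?thesis unfolding fb using True False ij p k' 
          by (simp add: Bent2 ASent1)
      next
        case False2: False
        hence k: "j - m < n - m" using ij mn by simp
        have eqc: "i - m = j - m \<longleftrightarrow> i = j" using False False2 by arith
        have ne: "bst q (blk q (hh (i - m))) \<noteq> hh (j - m)"
          using hhn[OF k] p by metis
        show ?thesis unfolding fb using False False2 ij p k' k ne hhn[OF k] hhinj[OF k' k] eqc
          by (simp add: Bent2 ASent2 Aent Dg_def)
      qed
    qed
  qed (use Bcar mn in \<open>auto simp: Dg_def lap_def M_def\<close>)
  have SBT: "A = S * B * T"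
  proof -
    have "S * B = (S * T) * (A * S)" unfolding B_def
      by (rule assoc_mult_mat[OF Scar Tcar AScar, symmetric])
    also have "\<dots> = A * S" using ST left_mult_one_mat[OF AScar] by simp
    finally have "S * B * T = (A * S) * T" by simp
    also have "\<dots> = A * (S * T)" by (rule assoc_mult_mat[OF Acar Scar Tcar])
    also have "\<dots> = A" using ST right_mult_one_mat[OF Acar] by simp
    finally show ?thesis by simp
  qed
  have sim: "similar_mat A B" unfolding similar_mat_def similar_mat_wit_def
    using Acar Bcar Scar Tcar ST TS SBT by (intro exI[of _ S] exI[of _ T]) (auto simp: Let_def)
  have Ccar: "C \<in> carrier_mat m (n-m)" by (simp add: C_def)
  have Dgcar: "Dg \<in> carrier_mat (n-m) (n-m)" by (simp add: Dg_def)
  have cpAB: "char_poly A = char_poly (lap M) * char_poly Dg"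
    unfolding char_poly_similar[OF sim] Bblock by (rule char_poly_four_block_zeros[OF lapM Ccar Dgcar])
  have ut: "upper_triangular Dg" by (simp add: upper_triangular_def Dg_def)
  have dg: "diag_mat Dg = map (\<lambda>i. d (blk q (hh i))) [0..<n-m]"
    by (simp add: diag_mat_def Dg_def)
  have cpDg: "char_poly Dg = (\<Prod>a\<leftarrow>map (\<lambda>i. d (blk q (hh i))) [0..<n-m]. [:- a, 1:])"
    using char_poly_upper_triangular[OF Dgcar ut] dg by simp
  have nz1: "char_poly (lap M) \<noteq> 0" using degree_monic_char_poly[OF lapM] by auto
  have nz2: "char_poly Dg \<noteq> 0" using degree_monic_char_poly[OF Dgcar] by auto
  have "proots (char_poly Dg) = (\<Sum>i\<in>{0..<n-m}. {# d (blk q (hh i)) #})"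
    unfolding cpDg proots_lin_prod sum_upt_mset ..
  also have "\<dots> = (\<Sum>a\<in>NF. {# d (blk q a) #})"
    by (rule sum.reindex_bij_betw[OF hh])
  also have "\<dots> = (\<Sum>a<n. if a \<in> NF then {# d (blk q a) #} else 0)"
  proof -
    have "NF = {..<n} \<inter> NF" by (auto simp: NF_def)
    thus ?thesis using sum.inter_restrict[of "{..<n}" "\<lambda>a. {# d (blk q a) #}" NF] by simp
  qed
  also have "\<dots> = (\<Sum>j<m. \<Sum>a\<in>{bst q j..<bst q (Suc j)}. if a \<in> NF then {# d (blk q a) #} else 0)"
    unfolding n_def by (rule sum_blocks)
  also have "\<dots> = (\<Sum>j<m. replicate_mset (q j - 1) (d j))"
  proof (rule sum.cong[OF refl])
    fix j assume "j \<in> {..<m}"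
    hence j: "j < m" by simp
    have le: "bst q (Suc j) \<le> n" unfolding n_def by (rule bst_mono) (use j in simp)
    have split: "{bst q j..<bst q (Suc j)} = insert (bst q j) {Suc (bst q j)..<bst q (Suc j)}"
      using q[OF j] by (auto simp: bst_Suc)
    have "(\<Sum>a\<in>{bst q j..<bst q (Suc j)}. if a \<in> NF then {# d (blk q a) #} else 0)
        = (\<Sum>a\<in>{Suc (bst q j)..<bst q (Suc j)}. {# d j #})"
    proof -
      have "bst q j \<notin> NF" using bstn[OF j] by (simp add: NF_def)
      moreover have "a \<in> NF \<and> blk q a = j" if "a \<in> {Suc (bst q j)..<bst q (Suc j)}" for a
        using that le blk_eq[of q j a] by (auto simp: NF_def)
      ultimately show ?thesis unfolding split by (auto intro: sum.cong)
    qed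
    also have "\<dots> = replicate_mset (q j - 1) (d j)"
      by (simp add: sum_single_mset bst_Suc)
    finally show "(\<Sum>a\<in>{bst q j..<bst q (Suc j)}. if a \<in> NF then {# d (blk q a) #} else 0)
        = replicate_mset (q j - 1) (d j)" .
  qed
  finally have pDg: "proots (char_poly Dg) = (\<Sum>j<m. replicate_mset (q j - 1) (d j))" .
  show ?thesis
    unfolding eigenvalues_def A_def[symmetric] Lt_def[symmetric] cpAB proots_mult[OF nz1 nz2] pDg
    by (simp add: d_def)
qed


lemma dot2: "A \<in> carrier_mat 2 k \<Longrightarrow> i < k \<Longrightarrow> j < k \<Longrightarrow>
   col A i \<bullet> col A j = A $$ (0,i) * A $$ (0,j) + A $$ (1,i) * A $$ (1,j)"
  by (simp add: scalar_prod_def numeral_2_eq_2 atLeast0LessThan lessThan_Suc add.commute)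

lemma circ_unit: "Y \<in> circles k \<Longrightarrow> j < k \<Longrightarrow> Y $$ (0,j) * Y $$ (0,j) + Y $$ (1,j) * Y $$ (1,j) = 1"
  unfolding circles_def using dot2[of Y k j j] by auto

lemma inner_bound: assumes "x0 * x0 + x1 * x1 = (1::real)" "y0 * y0 + y1 * y1 = 1"
  shows "x0 * y0 + x1 * y1 \<in> {-1..1}"
proof -
  have "(x0 * y0 + x1 * y1)^2 + (x0 * y1 - x1 * y0)^2 = (x0 * x0 + x1 * x1) * (y0 * y0 + y1 * y1)"
    by (simp add: power2_eq_square algebra_simps)
  moreover have "0 \<le> (x0 * y1 - x1 * y0)^2" by simp
  moreover have "(x0 * x0 + x1 * x1) * (y0 * y0 + y1 * y1) = 1" using assms by simp
  ultimately have "(x0 * y0 + x1 * y1)^2 \<le> 1" by linarith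
  hence "\<bar>x0 * y0 + x1 * y1\<bar> \<le> 1" by (simp only: abs_square_le_1)
  thus ?thesis by (simp add: abs_le_iff)
qed

lemma frob_expand: assumes W: "W \<in> carrier_mat k k" and Y: "Y \<in> carrier_mat 2 k"
  shows "frob W (map_mat \<phi> (transpose_mat Y * Y)) =
    (\<Sum>i<k. \<Sum>j<k. W $$ (j,i) * \<phi> (Y $$ (0,j) * Y $$ (0,i) + Y $$ (1,j) * Y $$ (1,i)))"
proof -
  have YY: "transpose_mat Y * Y \<in> carrier_mat k k" using Y by simp
  have e: "(transpose_mat Y * Y) $$ (j,i) = Y $$ (0,j) * Y $$ (0,i) + Y $$ (1,j) * Y $$ (1,i)"
    if "i < k" "j < k" for i j
    using that Y by (simp add: index_mult_mat scalar_prod_def numeral_2_eq_2 atLeast0LessThan lessThan_Suc add.commute)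
  have "frob W (map_mat \<phi> (transpose_mat Y * Y)) = (\<Sum>i<k. (transpose_mat W * map_mat \<phi> (transpose_mat Y * Y)) $$ (i,i))"
    using W by (simp add: frob_def tr_def)
  also have "\<dots> = (\<Sum>i<k. \<Sum>j<k. W $$ (j,i) * \<phi> (Y $$ (0,j) * Y $$ (0,i) + Y $$ (1,j) * Y $$ (1,i)))"
  proof (rule sum.cong[OF refl])
    fix i assume "i \<in> {..<k}"
    hence i: "i < k" by simp
    have "(transpose_mat W * map_mat \<phi> (transpose_mat Y * Y)) $$ (i,i)
       = (\<Sum>j<k. transpose_mat W $$ (i,j) * map_mat \<phi> (transpose_mat Y * Y) $$ (j,i))"
      by (rule mult_entry[of _ k k _ k]) (use W YY i in auto)
    also have "\<dots> = (\<Sum>j<k. W $$ (j,i) * \<phi> (Y $$ (0,j) * Y $$ (0,i) + Y $$ (1,j) * Y $$ (1,i)))"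
      by (rule sum.cong[OF refl]) (use W YY i e in auto)
    finally show "(transpose_mat W * map_mat \<phi> (transpose_mat Y * Y)) $$ (i,i) = \<dots>" .
  qed
  finally show ?thesis .
qed

lemma deriv_F:
  fixes \<phi> \<phi>' :: "real \<Rightarrow> real" and \<gamma> :: "real \<Rightarrow> real mat"
  assumes d1: "\<And>t. t \<in> {-1..1} \<Longrightarrow> (\<phi> has_real_derivative \<phi>' t) (at t within {-1..1})"
    and g: "\<And>t. \<gamma> t \<in> circles k" and W: "W \<in> carrier_mat k k"
    and D: "\<And>a b. a < 2 \<Longrightarrow> b < k \<Longrightarrow> ((\<lambda>t. \<gamma> t $$ (a,b)) has_real_derivative D a b) (at 0)"
  shows "((\<lambda>t. 1/2 * frob W (map_mat \<phi> (transpose_mat (\<gamma> t) * \<gamma> t))) has_real_derivative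
     1/2 * (\<Sum>i<k. \<Sum>j<k. W $$ (j,i) * (\<phi>' (\<gamma> 0 $$ (0,j) * \<gamma> 0 $$ (0,i) + \<gamma> 0 $$ (1,j) * \<gamma> 0 $$ (1,i)) *
       (D 0 j * \<gamma> 0 $$ (0,i) + \<gamma> 0 $$ (0,j) * D 0 i + (D 1 j * \<gamma> 0 $$ (1,i) + \<gamma> 0 $$ (1,j) * D 1 i)))))
     (at 0)"
proof -
  have car: "\<gamma> t \<in> carrier_mat 2 k" for t using g[of t] by (simp add: circles_def)
  define p where "p j i t = \<gamma> t $$ (0,j) * \<gamma> t $$ (0,i) + \<gamma> t $$ (1,j) * \<gamma> t $$ (1,i)" for j i t
  have f: "(\<lambda>t. 1/2 * frob W (map_mat \<phi> (transpose_mat (\<gamma> t) * \<gamma> t)))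
      = (\<lambda>t. 1/2 * (\<Sum>i<k. \<Sum>j<k. W $$ (j,i) * \<phi> (p j i t)))"
    by (rule ext) (simp add: frob_expand[OF W car] p_def)
  have pb: "p j i t \<in> {-1..1}" if "i < k" "j < k" for i j t
    unfolding p_def by (rule inner_bound) (use circ_unit[OF g] that in auto)
  have pd: "(p j i has_real_derivative (D 0 j * \<gamma> 0 $$ (0,i) + \<gamma> 0 $$ (0,j) * D 0 i + (D 1 j * \<gamma> 0 $$ (1,i) + \<gamma> 0 $$ (1,j) * D 1 i))) (at 0)"
    if "i < k" "j < k" for i j
  proof -
    have d: "((\<lambda>t. \<gamma> t $$ (a,b)) has_real_derivative D a b) (at 0)" if "a < 2" "b \<in> {i,j}" for a b
      using D that \<open>i < k\<close> \<open>j < k\<close> by auto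
    have "((\<lambda>t. \<gamma> t $$ (0,j) * \<gamma> t $$ (0,i) + \<gamma> t $$ (1,j) * \<gamma> t $$ (1,i)) has_real_derivative
       (D 0 j * \<gamma> 0 $$ (0,i) + D 0 i * \<gamma> 0 $$ (0,j) + (D 1 j * \<gamma> 0 $$ (1,i) + D 1 i * \<gamma> 0 $$ (1,j)))) (at 0)"
      by (rule DERIV_add[OF DERIV_mult[OF d d] DERIV_mult[OF d d]]) auto
    thus ?thesis unfolding p_def[abs_def] by (simp add: ac_simps)
  qed
  have cd: "((\<lambda>t. \<phi> (p j i t)) has_real_derivative \<phi>' (p j i 0) * (D 0 j * \<gamma> 0 $$ (0,i) + \<gamma> 0 $$ (0,j) * D 0 i + (D 1 j * \<gamma> 0 $$ (1,i) + \<gamma> 0 $$ (1,j) * D 1 i))) (at 0)"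
    if "i < k" "j < k" for i j
  proof -
    have "(\<phi> has_real_derivative \<phi>' (p j i 0)) (at (p j i 0) within (p j i ` UNIV))"
      by (rule DERIV_subset[OF d1]) (use pb[OF that] in auto)
    from DERIV_image_chain[OF this pd[OF that]] show ?thesis by (simp add: o_def)
  qed
  show ?thesis unfolding f
    apply (rule DERIV_cmult, rule DERIV_sum, rule DERIV_sum, rule DERIV_cmult)
    using cd unfolding p_def by auto
qed



lemma double_delta: assumes "j < (m::nat)"
  shows "(\<Sum>i<m. \<Sum>l<m. (F i l :: real) * ((if l = j then a i else 0) + (if i = j then b l else 0)))
     = (\<Sum>i<m. F i j * a i) + (\<Sum>l<m. F j l * b l)"
proof -
  have e: "F i l * ((if l = j then a i else 0) + (if i = j then b l else 0))
      = (if l = j then F i l * a i else 0) + (if i = j then F i l * b l else 0)" for i l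
    by (simp add: distrib_left)
  have e2: "(\<Sum>l<m. if i = j then F i l * b l else 0) = (if i = j then (\<Sum>l<m. F i l * b l) else 0)" for i
    by simp
  show ?thesis unfolding e sum.distrib e2 using assms by (simp add: sum.delta')
qed

lemma rot_id: "(c * x0 - s * x1) * (c * x0 - s * x1) + (s * x0 + c * x1) * (s * x0 + c * x1)
   = (s * s + c * c) * (x0 * x0 + x1 * (x1::real))"
  by (simp add: algebra_simps)

lemma crit_cond:
  fixes \<phi> \<phi>' :: "real \<Rightarrow> real" and q :: "nat \<Rightarrow> nat"
  assumes d1: "\<And>t. t \<in> {-1..1} \<Longrightarrow> (\<phi> has_real_derivative \<phi>' t) (at t within {-1..1})"
    and q: "\<And>i. i < m \<Longrightarrow> q i > 0"
    and X: "X \<in> circles m"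
    and crit: "critical m (\<lambda>Y. 1/2 * frob (mat m m (\<lambda>(i,j). real (q i) * real (q j)))
                                   (map_mat \<phi> (transpose_mat Y * Y))) X"
    and j: "j < m"
  shows "(\<Sum>k<m. real (q k) * \<phi>' (X $$ (0,k) * X $$ (0,j) + X $$ (1,k) * X $$ (1,j)) *
            (X $$ (0,k) * (- X $$ (1,j)) + X $$ (1,k) * X $$ (0,j))) = 0"
proof -
  define x0 where "x0 = X $$ (0,j)"
  define x1 where "x1 = X $$ (1,j)"
  have Xc: "X \<in> carrier_mat 2 m" using X by (simp add: circles_def)
  have xu: "x0 * x0 + x1 * x1 = 1" using circ_unit[OF X j] by (simp add: x0_def x1_def)
  define \<Gamma> where "\<Gamma> t = mat 2 m (\<lambda>(a,b). if b = j then (if a = 0 then cos t * x0 - sin t * x1 else sin t * x0 + cos t * x1)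
     else X $$ (a,b))" for t
  have Gc: "\<Gamma> t \<in> carrier_mat 2 m" for t by (simp add: \<Gamma>_def)
  have Gent: "\<Gamma> t $$ (a,b) = (if b = j then (if a = 0 then cos t * x0 - sin t * x1 else sin t * x0 + cos t * x1)
     else X $$ (a,b))" if "a < 2" "b < m" for a b t using that by (simp add: \<Gamma>_def)
  have Gcirc: "\<Gamma> t \<in> circles m" for t
    unfolding circles_def
  proof (intro CollectI conjI allI impI)
    show "\<Gamma> t \<in> carrier_mat 2 m" by (rule Gc)
    fix b assume b: "b < m"
    have "col (\<Gamma> t) b \<bullet> col (\<Gamma> t) b = \<Gamma> t $$ (0,b) * \<Gamma> t $$ (0,b) + \<Gamma> t $$ (1,b) * \<Gamma> t $$ (1,b)"
      by (rule dot2[OF Gc b b])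
    also have "\<dots> = 1"
    proof (cases "b = j")
      case True
      have sc: "sin t * sin t + cos t * cos t = 1" using sin_cos_squared_add[of t] by (simp add: power2_eq_square)
      have "(cos t * x0 - sin t * x1) * (cos t * x0 - sin t * x1) + (sin t * x0 + cos t * x1) * (sin t * x0 + cos t * x1)
          = (sin t * sin t + cos t * cos t) * (x0 * x0 + x1 * x1)"
        by (rule rot_id)
      also have "\<dots> = x0 * x0 + x1 * x1" using sc by simp
      finally have "(cos t * x0 - sin t * x1) * (cos t * x0 - sin t * x1) + (sin t * x0 + cos t * x1) * (sin t * x0 + cos t * x1)
          = x0 * x0 + x1 * x1" .
      then show ?thesis using True b xu by (simp add: Gent)
    next
      case False
      then show ?thesis using b circ_unit[OF X b] by (simp add: Gent)
    qed
    finally show "col (\<Gamma> t) b \<bullet> col (\<Gamma> t) b = 1" .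
  qed
  have G0: "\<Gamma> 0 = X"
    by (rule eq_matI) (use Xc in \<open>auto simp: \<Gamma>_def x0_def x1_def less_2_cases_iff\<close>)
  define Dv where "Dv a b = (if b = j then (if a = (0::nat) then - x1 else x0) else 0)" for a b
  have DG: "((\<lambda>t. \<Gamma> t $$ (a,b)) has_real_derivative Dv a b) (at 0)" if "a < 2" "b < m" for a b
  proof -
    have e: "(\<lambda>t. \<Gamma> t $$ (a,b)) = (\<lambda>t. if b = j then (if a = 0 then cos t * x0 - sin t * x1 else sin t * x0 + cos t * x1)
     else X $$ (a,b))" using Gent[OF that] by auto
    show ?thesis unfolding e Dv_def
      by (cases "b = j"; cases "a = 0") (auto intro!: derivative_eq_intros)
  qed
  define W where "W = mat m m (\<lambda>(i,j). real (q i) * real (q j))"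
  have Wc: "W \<in> carrier_mat m m" by (simp add: W_def)
  have h0: "((\<lambda>t. 1/2 * frob W (map_mat \<phi> (transpose_mat (\<Gamma> t) * \<Gamma> t))) has_real_derivative 0) (at 0)"
  proof -
    have "\<forall>a<2. \<forall>b<m. (\<lambda>t. \<Gamma> t $$ (a,b)) differentiable (at 0)"
      using DG real_differentiable_def by blast
    thus ?thesis using crit Gcirc G0 unfolding critical_def W_def by blast
  qed
  note h1 = deriv_F[OF d1 Gcirc Wc DG]
  define P where "P l i = X $$ (0,l) * X $$ (0,i) + X $$ (1,l) * X $$ (1,i)" for l i
  define Aa where "Aa i = - x1 * X $$ (0,i) + x0 * X $$ (1,i)" for i
  define Bb where "Bb l = X $$ (0,l) * (- x1) + X $$ (1,l) * x0" for l
  define F where "F i l = W $$ (l,i) * \<phi>' (P l i)" for i l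
  have "(\<Sum>i<m. \<Sum>l<m. W $$ (l,i) * (\<phi>' (\<Gamma> 0 $$ (0,l) * \<Gamma> 0 $$ (0,i) + \<Gamma> 0 $$ (1,l) * \<Gamma> 0 $$ (1,i)) *
       (Dv 0 l * \<Gamma> 0 $$ (0,i) + \<Gamma> 0 $$ (0,l) * Dv 0 i + (Dv 1 l * \<Gamma> 0 $$ (1,i) + \<Gamma> 0 $$ (1,l) * Dv 1 i))))
     = (\<Sum>i<m. \<Sum>l<m. F i l * ((if l = j then Aa i else 0) + (if i = j then Bb l else 0)))"
    unfolding G0 by (intro sum.cong refl) (auto simp: F_def P_def Aa_def Bb_def Dv_def x0_def x1_def algebra_simps)
  also have "\<dots> = (\<Sum>i<m. F i j * Aa i) + (\<Sum>l<m. F j l * Bb l)" by (rule double_delta[OF j])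
  finally have V: "(\<Sum>i<m. \<Sum>l<m. W $$ (l,i) * (\<phi>' (\<Gamma> 0 $$ (0,l) * \<Gamma> 0 $$ (0,i) + \<Gamma> 0 $$ (1,l) * \<Gamma> 0 $$ (1,i)) *
       (Dv 0 l * \<Gamma> 0 $$ (0,i) + \<Gamma> 0 $$ (0,l) * Dv 0 i + (Dv 1 l * \<Gamma> 0 $$ (1,i) + \<Gamma> 0 $$ (1,l) * Dv 1 i))))
     = (\<Sum>i<m. F i j * Aa i) + (\<Sum>l<m. F j l * Bb l)" .
  define S where "S = (\<Sum>k<m. real (q k) * \<phi>' (X $$ (0,k) * X $$ (0,j) + X $$ (1,k) * X $$ (1,j)) *
            (X $$ (0,k) * (- X $$ (1,j)) + X $$ (1,k) * X $$ (0,j)))"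
  have s1: "(\<Sum>i<m. F i j * Aa i) = real (q j) * S"
    unfolding S_def sum_distrib_left
    by (intro sum.cong refl) (use j in \<open>auto simp: F_def W_def P_def Aa_def x0_def x1_def algebra_simps\<close>)
  have s2: "(\<Sum>l<m. F j l * Bb l) = real (q j) * S"
    unfolding S_def sum_distrib_left
    by (intro sum.cong refl) (use j in \<open>auto simp: F_def W_def P_def Bb_def x0_def x1_def algebra_simps\<close>)
  have "1/2 * (real (q j) * S + real (q j) * S) = 0"
    using DERIV_unique[OF h1 h0] V s1 s2 by simp
  hence "real (q j) * S = 0" by (simp only: field_simps) simp
  hence "S = 0" using q[OF j] by simp
  thus ?thesis by (simp add: S_def)
qed



lemma perp_id: assumes "x0 * x0 + x1 * x1 = (1::real)" "x0 * v0 + x1 * v1 = 0"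
  shows "w0 * v0 + w1 * v1 = (w0 * (- x1) + w1 * x0) * (- x1 * v0 + x0 * v1)"
proof -
  have "(w0 * (- x1) + w1 * x0) * (- x1 * v0 + x0 * v1) - (w0 * v0 + w1 * v1)
     = (x0 * x0 + x1 * x1 - 1) * (w0 * v0 + w1 * v1) - (w0 * x0 + w1 * x1) * (x0 * v0 + x1 * v1)"
    by (simp add: algebra_simps)
  also have "\<dots> = 0" using assms by simp
  finally show ?thesis by simp
qed

lemma part1:
  fixes \<phi> \<phi>' :: "real \<Rightarrow> real" and q :: "nat \<Rightarrow> nat"
  assumes d1: "\<And>t. t \<in> {-1..1} \<Longrightarrow> (\<phi> has_real_derivative \<phi>' t) (at t within {-1..1})"
    and q: "\<And>i. i < m \<Longrightarrow> q i > 0"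
    and X: "X \<in> circles m"
    and crit: "critical m (\<lambda>Y. 1/2 * frob (mat m m (\<lambda>(i,j). real (q i) * real (q j)))
                                   (map_mat \<phi> (transpose_mat Y * Y))) X"
  shows "critical (bst q m) (\<lambda>Y. 1/2 * frob (mat (bst q m) (bst q m) (\<lambda>_. 1))
                                   (map_mat \<phi> (transpose_mat Y * Y))) (rep_cols q m X)"
proof -
  define n where "n = bst q m"
  define Xt where "Xt = rep_cols q m X"
  have Xc: "X \<in> carrier_mat 2 m" using X by (simp add: circles_def)
  have blkn: "blk q b < m" if "b < n" for b using blk_props(1)[of b q m] that by (simp add: n_def)
  have Xtc: "Xt \<in> carrier_mat 2 n" by (simp add: Xt_def rep_cols_def n_def bst_def)
  have Xtent: "Xt $$ (a,b) = X $$ (a, blk q b)" if "a < 2" "b < n" for a b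
    using that by (simp add: Xt_def rep_cols_def n_def bst_def)
  have Xtcirc: "Xt \<in> circles n"
    unfolding circles_def
  proof (intro CollectI conjI allI impI)
    show "Xt \<in> carrier_mat 2 n" by (rule Xtc)
    fix b assume b: "b < n"
    show "col Xt b \<bullet> col Xt b = 1"
      using dot2[OF Xtc b b] Xtent[of 0 b] Xtent[of 1 b] b circ_unit[OF X blkn[OF b]] by simp
  qed
  have cc: "(\<Sum>k<m. real (q k) * \<phi>' (X $$ (0,k) * X $$ (0,j) + X $$ (1,k) * X $$ (1,j)) *
            (X $$ (0,k) * (- X $$ (1,j)) + X $$ (1,k) * X $$ (0,j))) = 0" if "j < m" for j
    by (rule crit_cond[OF d1 q X crit that])
  have cc2: "(\<Sum>b<n. \<phi>' (Xt $$ (0,b) * Xt $$ (0,i) + Xt $$ (1,b) * Xt $$ (1,i)) *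
            (Xt $$ (0,b) * (- Xt $$ (1,i)) + Xt $$ (1,b) * Xt $$ (0,i))) = 0" if i: "i < n" for i
  proof -
    define j where "j = blk q i"
    have j: "j < m" using blkn[OF i] by (simp add: j_def)
    have "(\<Sum>b<n. \<phi>' (Xt $$ (0,b) * Xt $$ (0,i) + Xt $$ (1,b) * Xt $$ (1,i)) *
            (Xt $$ (0,b) * (- Xt $$ (1,i)) + Xt $$ (1,b) * Xt $$ (0,i)))
        = (\<Sum>b<bst q m. (\<lambda>k. \<phi>' (X $$ (0,k) * X $$ (0,j) + X $$ (1,k) * X $$ (1,j)) *
            (X $$ (0,k) * (- X $$ (1,j)) + X $$ (1,k) * X $$ (0,j))) (blk q b))"
      by (rule sum.cong) (use i in \<open>auto simp: Xtent j_def n_def\<close>)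
    also have "\<dots> = (\<Sum>k<m. real (q k) * (\<phi>' (X $$ (0,k) * X $$ (0,j) + X $$ (1,k) * X $$ (1,j)) *
            (X $$ (0,k) * (- X $$ (1,j)) + X $$ (1,k) * X $$ (0,j))))"
      by (rule sum_blk)
    also have "\<dots> = 0" using cc[OF j] by (simp add: mult.assoc)
    finally show ?thesis .
  qed
  show ?thesis
    unfolding n_def[symmetric] Xt_def[symmetric] critical_def
  proof (intro conjI allI impI)
    show "Xt \<in> circles n" by (rule Xtcirc)
    fix \<gamma> :: "real \<Rightarrow> real mat"
    assume asm: "(\<forall>t. \<gamma> t \<in> circles n) \<and> \<gamma> 0 = Xt \<and>
        (\<forall>a<2. \<forall>b<n. (\<lambda>t. \<gamma> t $$ (a, b)) differentiable at 0)"
    hence gc: "\<And>t. \<gamma> t \<in> circles n" and g0: "\<gamma> 0 = Xt"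
      and gd: "\<And>a b. a < 2 \<Longrightarrow> b < n \<Longrightarrow> (\<lambda>t. \<gamma> t $$ (a, b)) differentiable at 0" by auto
    define D where "D a b = (SOME E. ((\<lambda>t. \<gamma> t $$ (a,b)) has_real_derivative E) (at 0))" for a b
    have D: "((\<lambda>t. \<gamma> t $$ (a,b)) has_real_derivative D a b) (at 0)" if "a < 2" "b < n" for a b
      unfolding D_def by (rule someI_ex) (use gd[OF that] real_differentiable_def in blast)
    have orth: "Xt $$ (0,b) * D 0 b + Xt $$ (1,b) * D 1 b = 0" if b: "b < n" for b
    proof -
      have e: "(\<lambda>t. \<gamma> t $$ (0,b) * \<gamma> t $$ (0,b) + \<gamma> t $$ (1,b) * \<gamma> t $$ (1,b)) = (\<lambda>t. 1)"
        using circ_unit[OF gc b] by auto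
      have "((\<lambda>t. \<gamma> t $$ (0,b) * \<gamma> t $$ (0,b) + \<gamma> t $$ (1,b) * \<gamma> t $$ (1,b)) has_real_derivative
          (D 0 b * \<gamma> 0 $$ (0,b) + D 0 b * \<gamma> 0 $$ (0,b) + (D 1 b * \<gamma> 0 $$ (1,b) + D 1 b * \<gamma> 0 $$ (1,b)))) (at 0)"
        by (rule DERIV_add[OF DERIV_mult[OF D D] DERIV_mult[OF D D]]) (use b in auto)
      hence "((\<lambda>t. 1) has_real_derivative
          (D 0 b * \<gamma> 0 $$ (0,b) + D 0 b * \<gamma> 0 $$ (0,b) + (D 1 b * \<gamma> 0 $$ (1,b) + D 1 b * \<gamma> 0 $$ (1,b)))) (at 0)"
        unfolding e .
      from DERIV_unique[OF this DERIV_const] show ?thesis using g0 by (simp add: algebra_simps)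
    qed
    have nrm: "Xt $$ (0,b) * Xt $$ (0,b) + Xt $$ (1,b) * Xt $$ (1,b) = 1" if "b < n" for b
      by (rule circ_unit[OF Xtcirc that])
    define c where "c i = - Xt $$ (1,i) * D 0 i + Xt $$ (0,i) * D 1 i" for i
    define P where "P j i = Xt $$ (0,j) * Xt $$ (0,i) + Xt $$ (1,j) * Xt $$ (1,i)" for j i
    define T where "T j i = Xt $$ (0,j) * (- Xt $$ (1,i)) + Xt $$ (1,j) * Xt $$ (0,i)" for j i
    have Wc: "mat n n (\<lambda>_. 1) \<in> carrier_mat n n" by simp
    note h1 = deriv_F[OF d1 gc Wc D]
    have "(\<Sum>i<n. \<Sum>j<n. mat n n (\<lambda>_. 1) $$ (j,i) * (\<phi>' (\<gamma> 0 $$ (0,j) * \<gamma> 0 $$ (0,i) + \<gamma> 0 $$ (1,j) * \<gamma> 0 $$ (1,i)) *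
       (D 0 j * \<gamma> 0 $$ (0,i) + \<gamma> 0 $$ (0,j) * D 0 i + (D 1 j * \<gamma> 0 $$ (1,i) + \<gamma> 0 $$ (1,j) * D 1 i))))
      = (\<Sum>i<n. \<Sum>j<n. \<phi>' (P j i) * T i j * c j) + (\<Sum>i<n. \<Sum>j<n. \<phi>' (P j i) * T j i * c i)"
    proof -
      have "(\<Sum>i<n. \<Sum>j<n. mat n n (\<lambda>_. 1) $$ (j,i) * (\<phi>' (\<gamma> 0 $$ (0,j) * \<gamma> 0 $$ (0,i) + \<gamma> 0 $$ (1,j) * \<gamma> 0 $$ (1,i)) *
       (D 0 j * \<gamma> 0 $$ (0,i) + \<gamma> 0 $$ (0,j) * D 0 i + (D 1 j * \<gamma> 0 $$ (1,i) + \<gamma> 0 $$ (1,j) * D 1 i))))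
        = (\<Sum>i<n. \<Sum>j<n. \<phi>' (P j i) * T i j * c j + \<phi>' (P j i) * T j i * c i)"
      proof (intro sum.cong refl)
        fix i j assume "i \<in> {..<n}" "j \<in> {..<n}"
        hence i: "i < n" and j: "j < n" by auto
        have e1: "D 0 j * Xt $$ (0,i) + D 1 j * Xt $$ (1,i) = T i j * c j"
          using perp_id[OF nrm[OF j] orth[OF j], of "Xt $$ (0,i)" "Xt $$ (1,i)"]
          by (simp add: T_def c_def algebra_simps)
        have e2: "Xt $$ (0,j) * D 0 i + Xt $$ (1,j) * D 1 i = T j i * c i"
          using perp_id[OF nrm[OF i] orth[OF i], of "Xt $$ (0,j)" "Xt $$ (1,j)"]
          by (simp add: T_def c_def algebra_simps)
        have "D 0 j * Xt $$ (0,i) + Xt $$ (0,j) * D 0 i + (D 1 j * Xt $$ (1,i) + Xt $$ (1,j) * D 1 i)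
          = T i j * c j + T j i * c i" using e1 e2 by (simp add: algebra_simps)
        thus "mat n n (\<lambda>_. 1) $$ (j,i) * (\<phi>' (\<gamma> 0 $$ (0,j) * \<gamma> 0 $$ (0,i) + \<gamma> 0 $$ (1,j) * \<gamma> 0 $$ (1,i)) *
           (D 0 j * \<gamma> 0 $$ (0,i) + \<gamma> 0 $$ (0,j) * D 0 i + (D 1 j * \<gamma> 0 $$ (1,i) + \<gamma> 0 $$ (1,j) * D 1 i)))
           = \<phi>' (P j i) * T i j * c j + \<phi>' (P j i) * T j i * c i"
          using i j by (simp add: g0 P_def algebra_simps)
      qed
      also have "\<dots> = (\<Sum>i<n. \<Sum>j<n. \<phi>' (P j i) * T i j * c j) + (\<Sum>i<n. \<Sum>j<n. \<phi>' (P j i) * T j i * c i)"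
        by (simp add: sum.distrib)
      finally show ?thesis .
    qed
    also have "(\<Sum>i<n. \<Sum>j<n. \<phi>' (P j i) * T j i * c i) = 0"
    proof -
      have "(\<Sum>i<n. \<Sum>j<n. \<phi>' (P j i) * T j i * c i) = (\<Sum>i<n. c i * (\<Sum>j<n. \<phi>' (P j i) * T j i))"
        by (simp add: sum_distrib_left algebra_simps)
      also have "\<dots> = 0" using cc2 by (simp add: P_def T_def)
      finally show ?thesis .
    qed
    also have "(\<Sum>i<n. \<Sum>j<n. \<phi>' (P j i) * T i j * c j) = 0"
    proof -
      have "(\<Sum>i<n. \<Sum>j<n. \<phi>' (P j i) * T i j * c j) = (\<Sum>j<n. \<Sum>i<n. \<phi>' (P j i) * T i j * c j)"
        by (rule sum.swap)
      also have "\<dots> = (\<Sum>j<n. c j * (\<Sum>i<n. \<phi>' (P i j) * T i j))"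
        by (simp add: sum_distrib_left P_def algebra_simps)
      also have "\<dots> = 0" using cc2 by (simp add: P_def T_def)
      finally show ?thesis .
    qed
    finally have V: "(\<Sum>i<n. \<Sum>j<n. mat n n (\<lambda>_. 1) $$ (j,i) * (\<phi>' (\<gamma> 0 $$ (0,j) * \<gamma> 0 $$ (0,i) + \<gamma> 0 $$ (1,j) * \<gamma> 0 $$ (1,i)) *
       (D 0 j * \<gamma> 0 $$ (0,i) + \<gamma> 0 $$ (0,j) * D 0 i + (D 1 j * \<gamma> 0 $$ (1,i) + \<gamma> 0 $$ (1,j) * D 1 i)))) = 0"
      by simp
    show "((\<lambda>t. 1/2 * frob (mat n n (\<lambda>_. 1)) (map_mat \<phi> (transpose_mat (\<gamma> t) * \<gamma> t))) has_real_derivative 0) (at 0)"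
      using h1 unfolding V by simp
  qed
qed


theorem mainTheorem13:
  fixes \<phi> \<phi>' \<phi>'' :: "real \<Rightarrow> real" and m :: nat and q :: "nat \<Rightarrow> nat" and X :: "real mat"
  assumes d1: "\<And>t. t \<in> {-1..1} \<Longrightarrow> (\<phi> has_real_derivative \<phi>' t) (at t within {-1..1})"
    and d2: "\<And>t. t \<in> {-1..1} \<Longrightarrow> (\<phi>' has_real_derivative \<phi>'' t) (at t within {-1..1})"
    and c2: "continuous_on {-1..1} \<phi>''"
    and m: "m \<ge> 1"
    and q: "\<And>i. i < m \<Longrightarrow> q i > 0"
    and X: "X \<in> circles m"
  shows "let n = (\<Sum>i<m. q i);
             fm = (\<lambda>Y. 1/2 * frob (mat m m (\<lambda>(i,j). real (q i) * real (q j)))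
                                   (map_mat \<phi> (transpose_mat Y * Y)));
             fn = (\<lambda>Y. 1/2 * frob (mat n n (\<lambda>_. 1)) (map_mat \<phi> (transpose_mat Y * Y)));
             Xt = rep_cols q m X;
             h = (\<lambda>t. t * \<phi>' t - (1 - t^2) * \<phi>'' t);
             M = mat m m (\<lambda>(i,j). real (q i) * real (q j) * h (col X i \<bullet> col X j));
             d = (\<lambda>i. \<Sum>j<m. M $$ (i,j));
             Mt = mat n n (\<lambda>(i,j). h (col Xt i \<bullet> col Xt j))
         in (critical m fm X \<longrightarrow> critical n fn Xt) \<and>
            eigenvalues (sqrtQ q m * lap Mt * sqrtQ q m)
              = eigenvalues (lap M) + (\<Sum>i<m. replicate_mset (q i - 1) (d i))"
  proof -
  have nb: "(\<Sum>i<m. q i) = bst q m" by (simp add: bst_def)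
  define H where "H i j = (\<lambda>t. t * \<phi>' t - (1 - t^2) * \<phi>'' t) (col X i \<bullet> col X j)" for i j
  have Xc: "X \<in> carrier_mat 2 m" using X by (simp add: circles_def)
  have Xtc: "rep_cols q m X \<in> carrier_mat 2 (bst q m)" by (simp add: rep_cols_def bst_def)
  have blkn: "blk q b < m" if "b < bst q m" for b using blk_props(1)[of b q m] that by simp
  have Xtent: "rep_cols q m X $$ (a,b) = X $$ (a, blk q b)" if "a < 2" "b < bst q m" for a b
    using that by (simp add: rep_cols_def bst_def)
  have Mt: "mat (bst q m) (bst q m) (\<lambda>(i,j). (\<lambda>t. t * \<phi>' t - (1 - t^2) * \<phi>'' t) (col (rep_cols q m X) i \<bullet> col (rep_cols q m X) j))
     = mat (bst q m) (bst q m) (\<lambda>(a,b). H (blk q a) (blk q b))"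
  proof (rule eq_matI)
    fix i j assume "i < dim_row (mat (bst q m) (bst q m) (\<lambda>(a,b). H (blk q a) (blk q b)))"
      "j < dim_col (mat (bst q m) (bst q m) (\<lambda>(a,b). H (blk q a) (blk q b)))"
    hence i: "i < bst q m" and j: "j < bst q m" by auto
    have "col (rep_cols q m X) i \<bullet> col (rep_cols q m X) j = col X (blk q i) \<bullet> col X (blk q j)"
      using dot2[OF Xtc i j] dot2[OF Xc blkn[OF i] blkn[OF j]] Xtent i j by simp
    thus "mat (bst q m) (bst q m) (\<lambda>(i,j). (\<lambda>t. t * \<phi>' t - (1 - t^2) * \<phi>'' t) (col (rep_cols q m X) i \<bullet> col (rep_cols q m X) j)) $$ (i,j)
      = mat (bst q m) (bst q m) (\<lambda>(a,b). H (blk q a) (blk q b)) $$ (i,j)"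
      using i j by (simp add: H_def)
  qed auto
  have p2: "eigenvalues (sqrtQ q m * lap (mat (bst q m) (bst q m) (\<lambda>(a,b). H (blk q a) (blk q b))) * sqrtQ q m)
     = eigenvalues (lap (mat m m (\<lambda>(i,j). real (q i) * real (q j) * H i j))) +
       (\<Sum>i<m. replicate_mset (q i - 1) (\<Sum>j<m. mat m m (\<lambda>(i,j). real (q i) * real (q j) * H i j) $$ (i,j)))"
    by (rule part2[where q=q and m=m and H=H, OF q])
  have p1: "critical m (\<lambda>Y. 1/2 * frob (mat m m (\<lambda>(i,j). real (q i) * real (q j)))
                                   (map_mat \<phi> (transpose_mat Y * Y))) X \<longrightarrow>
     critical (bst q m) (\<lambda>Y. 1/2 * frob (mat (bst q m) (bst q m) (\<lambda>_. 1))
                                   (map_mat \<phi> (transpose_mat Y * Y))) (rep_cols q m X)"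
    using part1[where \<phi>=\<phi> and \<phi>'=\<phi>' and q=q and m=m and X=X, OF d1 q X] by blast
  show ?thesis
    unfolding Let_def nb
    using p1 p2 Mt by (simp add: H_def)
qed

end
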